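(* Let $m,n\geq 1$ and let $c_0:V(K_{m,n})\to\mathbb{Z}$ be any initial chip configuration on the complete bipartite graph $K_{m,n}$. Then the sequence of configurations $(c_t)_{t\ge0}$ produced by the diffusion process is eventually periodic, i.e. there exist $t\geq 0$ and $p\geq 1$ with $c_{t+p}=c_t$.
   Context: Diffusion process: for a finite simple graph $G$ and a chip configuration $c_t:V(G)\to\mathbb{Z}$ (negative values allowed), the next configuration is defined simultaneously for every vertex $u$ by $c_{t+1}(u)=c_t(u)-|\{w\in N(u): c_t(u)>c_t(w)\}|+|\{w\in N(u): c_t(u)<c_t(w)\}|$. *)

theory Defs
  imports Main
begin

text \<open>A finite simple graph is given by a finite vertex set V and a symmetric,
irreflexive adjacency relation E on V. The neighbourhood of u is {w \<in> V. E u w}.\<close>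

definition nbhd :: "'a set \<Rightarrow> ('a \<Rightarrow> 'a \<Rightarrow> bool) \<Rightarrow> 'a \<Rightarrow> 'a set" where
  "nbhd V E u = {w \<in> V. E u w}"

definition diffusion_step ::
  "'a set \<Rightarrow> ('a \<Rightarrow> 'a \<Rightarrow> bool) \<Rightarrow> ('a \<Rightarrow> int) \<Rightarrow> ('a \<Rightarrow> int)" where
  "diffusion_step V E c = (\<lambda>u. if u \<in> V then
       c u - int (card {w \<in> nbhd V E u. c u > c w})
           + int (card {w \<in> nbhd V E u. c u < c w})
     else c u)"

definition diffusion :: "'a set \<Rightarrow> ('a \<Rightarrow> 'a \<Rightarrow> bool) \<Rightarrow> ('a \<Rightarrow> int) \<Rightarrow> nat \<Rightarrow> ('a \<Rightarrow> int)" where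
  "diffusion V E c0 t = (diffusion_step V E ^^ t) c0"

definition Kmn_V :: "nat \<Rightarrow> nat \<Rightarrow> (nat + nat) set" where
  "Kmn_V m n = Inl ` {..<m} \<union> Inr ` {..<n}"

fun Kmn_E :: "nat + nat \<Rightarrow> nat + nat \<Rightarrow> bool" where
  "Kmn_E (Inl _) (Inr _) = True"
| "Kmn_E (Inr _) (Inl _) = True"
| "Kmn_E _ _ = False"

end

theory Submission
  imports Defs "HOL-Library.FuncSet"
begin

definition dl :: "'a set \<Rightarrow> ('a \<Rightarrow> 'a \<Rightarrow> bool) \<Rightarrow> ('a \<Rightarrow> int) \<Rightarrow> 'a \<Rightarrow> int" where
  "dl V E c u = (\<Sum>w\<in>V. if E u w then sgn (c w - c u) else 0)"

definition en :: "'a set \<Rightarrow> ('a \<Rightarrow> int) \<Rightarrow> int" where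
  "en V c = (\<Sum>u\<in>V. (c u)^2)"

definition dd :: "'a set \<Rightarrow> ('a \<Rightarrow> 'a \<Rightarrow> bool) \<Rightarrow> ('a \<Rightarrow> int) \<Rightarrow> int" where
  "dd V E c = (\<Sum>u\<in>V. \<Sum>w\<in>V. if E u w then \<bar>c u - c w\<bar> else 0)"

lemma card_filter_int:
  assumes "finite A"
  shows "int (card {x\<in>A. P x}) = (\<Sum>x\<in>A. if P x then 1 else 0)"
proof -
  have "int (card {x\<in>A. P x}) = (\<Sum>x\<in>{x\<in>A. P x}. 1)" by simp
  also have "\<dots> = (\<Sum>x\<in>A. if P x then 1 else 0)"
    by (rule sum.inter_filter[OF assms])
  finally show ?thesis .
qed

lemma step_eq:
  assumes "finite V" "u \<in> V"
  shows "diffusion_step V E c u = c u + dl V E c u"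
proof -
  have s1: "{w \<in> nbhd V E u. c u > c w} = {w\<in>V. E u w \<and> c w < c u}" by (auto simp: nbhd_def)
  have s2: "{w \<in> nbhd V E u. c u < c w} = {w\<in>V. E u w \<and> c w > c u}" by (auto simp: nbhd_def)
  have a: "int (card {w \<in> nbhd V E u. c u > c w}) = (\<Sum>w\<in>V. if E u w \<and> c w < c u then 1 else 0)"
    using card_filter_int[OF assms(1), of "\<lambda>w. E u w \<and> c w < c u"]
    unfolding s1 s2 .
  have b: "int (card {w \<in> nbhd V E u. c u < c w}) = (\<Sum>w\<in>V. if E u w \<and> c w > c u then 1 else 0)"
    using card_filter_int[OF assms(1), of "\<lambda>w. E u w \<and> c w > c u"]
    unfolding s1 s2 .
  have "(\<Sum>w\<in>V. if E u w \<and> c w > c u then 1 else 0) - (\<Sum>w\<in>V. if E u w \<and> c w < c u then 1 else 0)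
      = (\<Sum>w\<in>V. (if E u w \<and> c w > c u then 1 else 0) - (if E u w \<and> c w < c u then 1 else 0) :: int)"
    by (simp add: sum_subtractf)
  also have "\<dots> = dl V E c u"
    unfolding dl_def by (rule sum.cong) (auto simp: sgn_if)
  finally have f: "(\<Sum>w\<in>V. if E u w \<and> c w > c u then 1 else 0) - (\<Sum>w\<in>V. if E u w \<and> c w < c u then 1 else 0) = dl V E c u" .
  have e: "diffusion_step V E c u = c u - int (card {w \<in> nbhd V E u. c u > c w})
           + int (card {w \<in> nbhd V E u. c u < c w})"
    by (simp only: diffusion_step_def if_P[OF assms(2)])
  show ?thesis using e a b f by linarith
qed

lemma sum_dl:
  assumes "finite V" "\<And>u w. E u w = E w u"
  shows "(\<Sum>u\<in>V. dl V E c u) = 0"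
proof -
  define g where "g u w = (if E u w then sgn (c w - c u) else 0)" for u w
  have gs: "g w u = - g u w" for u w
    unfolding g_def using assms(2)[of u w] by (auto simp: sgn_if)
  have "(\<Sum>u\<in>V. \<Sum>w\<in>V. g u w) = (\<Sum>w\<in>V. \<Sum>u\<in>V. g u w)" by (rule sum.swap)
  also have "\<dots> = (\<Sum>w\<in>V. \<Sum>u\<in>V. - g w u)" by (intro sum.cong refl) (rule gs)
  also have "\<dots> = - (\<Sum>u\<in>V. \<Sum>w\<in>V. g u w)" by (simp add: sum_negf)
  finally have "(\<Sum>u\<in>V. \<Sum>w\<in>V. g u w) = 0" by simp
  then show ?thesis unfolding dl_def g_def .
qed

lemma cross_dl:
  assumes "finite V" "\<And>u w. E u w = E w u"
  shows "2 * (\<Sum>u\<in>V. c u * dl V E c u) = - dd V E c"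
proof -
  define g where "g u w = (if E u w then sgn (c w - c u) else 0)" for u w
  have gs: "g w u = - g u w" for u w
    unfolding g_def using assms(2)[of u w] by (auto simp: sgn_if)
  define X where "X = (\<Sum>u\<in>V. \<Sum>w\<in>V. c u * g u w)"
  have X1: "(\<Sum>u\<in>V. c u * dl V E c u) = X"
    unfolding X_def dl_def g_def by (simp add: sum_distrib_left)
  have "X = (\<Sum>w\<in>V. \<Sum>u\<in>V. c u * g u w)" unfolding X_def by (rule sum.swap)
  also have "\<dots> = (\<Sum>u\<in>V. \<Sum>w\<in>V. - (c w * g u w))"
    by (intro sum.cong refl) (metis gs mult_minus_right)
  finally have X2: "X = (\<Sum>u\<in>V. \<Sum>w\<in>V. - (c w * g u w))" .
  have "2 * X = X + X" by simp
  also have "\<dots> = (\<Sum>u\<in>V. \<Sum>w\<in>V. c u * g u w) + (\<Sum>u\<in>V. \<Sum>w\<in>V. - (c w * g u w))"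
    by (rule arg_cong2[where f="(+)", OF X_def X2])
  also have "\<dots> = (\<Sum>u\<in>V. \<Sum>w\<in>V. c u * g u w + - (c w * g u w))"
    by (simp only: sum.distrib[symmetric])
  also have "\<dots> = (\<Sum>u\<in>V. \<Sum>w\<in>V. - (if E u w then \<bar>c u - c w\<bar> else 0))"
    by (intro sum.cong refl) (auto simp: g_def sgn_if algebra_simps)
  also have "\<dots> = - dd V E c" by (simp add: dd_def sum_negf)
  finally show ?thesis using X1 by simp
qed

lemma dl_bound:
  assumes "finite V"
  shows "\<bar>dl V E c u\<bar> \<le> int (card V)"
proof -
  have "\<bar>dl V E c u\<bar> \<le> (\<Sum>w\<in>V. \<bar>if E u w then sgn (c w - c u) else 0\<bar>)"
    unfolding dl_def by (rule sum_abs)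
  also have "\<dots> \<le> (\<Sum>w\<in>V. 1)"
    by (rule sum_mono) (auto simp: abs_sgn_eq)
  finally show ?thesis by simp
qed

lemma en_step:
  assumes "finite V" "\<And>u w. E u w = E w u"
  shows "en V (diffusion_step V E c) \<le> en V c - dd V E c + int (card V)^3"
proof -
  have "en V (diffusion_step V E c) = (\<Sum>u\<in>V. (c u + dl V E c u)^2)"
    unfolding en_def using assms(1) by (intro sum.cong refl) (simp add: step_eq)
  also have "\<dots> = (\<Sum>u\<in>V. (c u)^2 + 2 * (c u * dl V E c u) + (dl V E c u)^2)"
    by (simp add: power2_eq_square algebra_simps)
  also have "\<dots> = en V c + 2 * (\<Sum>u\<in>V. c u * dl V E c u) + (\<Sum>u\<in>V. (dl V E c u)^2)"
    by (simp add: en_def sum.distrib sum_distrib_left)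
  also have "\<dots> = en V c - dd V E c + (\<Sum>u\<in>V. (dl V E c u)^2)"
    using cross_dl[OF assms] by simp
  also have "(\<Sum>u\<in>V. (dl V E c u)^2) \<le> (\<Sum>u\<in>V. int (card V)^2)"
  proof (rule sum_mono)
    fix u assume "u \<in> V"
    have "\<bar>dl V E c u\<bar>^2 \<le> int (card V)^2"
      by (rule power_mono[OF dl_bound[OF assms(1)]]) simp
    then show "(dl V E c u)^2 \<le> int (card V)^2" by simp
  qed
  also have "(\<Sum>u\<in>V. int (card V)^2) = int (card V)^3" by (simp add: power_def)
  finally show ?thesis by simp
qed

lemma sum_step:
  assumes "finite V" "\<And>u w. E u w = E w u"
  shows "(\<Sum>u\<in>V. diffusion_step V E c u) = (\<Sum>u\<in>V. c u)"
proof -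
  have "(\<Sum>u\<in>V. diffusion_step V E c u) = (\<Sum>u\<in>V. c u + dl V E c u)"
    using assms(1) by (intro sum.cong refl) (simp add: step_eq)
  also have "\<dots> = (\<Sum>u\<in>V. c u)" using sum_dl[OF assms] by (simp add: sum.distrib)
  finally show ?thesis .
qed

lemma Kmn_sym: "Kmn_E u w = Kmn_E w u"
  by (cases u; cases w) auto

lemma Kmn_fin: "finite (Kmn_V m n)"
  by (simp add: Kmn_V_def)

lemma dd_small_pair:
  assumes "m \<ge> 1" "n \<ge> 1" "u \<in> Kmn_V m n" "v \<in> Kmn_V m n"
  shows "\<bar>c u - c v\<bar> \<le> 2 * dd (Kmn_V m n) Kmn_E c"
proof -
  let ?V = "Kmn_V m n"
  have edge: "\<bar>c x - c y\<bar> \<le> dd ?V Kmn_E c" if "x \<in> ?V" "y \<in> ?V" "Kmn_E x y" for x y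
  proof -
    have nn: "\<And>a b. 0 \<le> (if Kmn_E a b then \<bar>c a - c b\<bar> else 0)" by simp
    have "\<bar>c x - c y\<bar> = (if Kmn_E x y then \<bar>c x - c y\<bar> else 0)" using that by simp
    also have "\<dots> \<le> (\<Sum>w\<in>?V. if Kmn_E x w then \<bar>c x - c w\<bar> else 0)"
      by (rule member_le_sum[OF that(2)]) (simp_all add: Kmn_fin)
    also have "\<dots> \<le> dd ?V Kmn_E c" unfolding dd_def
      by (rule member_le_sum[OF that(1)]) (simp_all add: Kmn_fin sum_nonneg)
    finally show ?thesis .
  qed
  have dnn: "0 \<le> dd ?V Kmn_E c" unfolding dd_def by (simp add: sum_nonneg)
  have l0: "Inl 0 \<in> ?V" and r0: "Inr 0 \<in> ?V" using assms by (auto simp: Kmn_V_def)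
  show ?thesis
  proof (cases u)
    case (Inl i) note ui = this
    show ?thesis
    proof (cases v)
      case (Inl j)
      have "\<bar>c u - c (Inr 0)\<bar> \<le> dd ?V Kmn_E c" using edge assms ui r0 by simp
      moreover have "\<bar>c (Inr 0) - c v\<bar> \<le> dd ?V Kmn_E c" using edge assms Inl r0 by simp
      ultimately show ?thesis by linarith
    next
      case (Inr j)
      then show ?thesis using edge[of u v] assms ui dnn by simp
    qed
  next
    case (Inr i) note ui = this
    show ?thesis
    proof (cases v)
      case (Inr j)
      have "\<bar>c u - c (Inl 0)\<bar> \<le> dd ?V Kmn_E c" using edge assms ui l0 by simp
      moreover have "\<bar>c (Inl 0) - c v\<bar> \<le> dd ?V Kmn_E c" using edge assms Inr l0 by simp
      ultimately show ?thesis by linarith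
    next
      case (Inl j)
      then show ?thesis using edge[of u v] assms ui dnn by simp
    qed
  qed
qed

lemma val_bound:
  assumes "finite V" "V \<noteq> {}" "\<And>u v. u \<in> V \<Longrightarrow> v \<in> V \<Longrightarrow> \<bar>c u - c v\<bar> \<le> K" "u \<in> V"
  shows "\<bar>c u\<bar> \<le> \<bar>\<Sum>v\<in>V. c v\<bar> + int (card V) * K"
proof -
  have N: "card V \<ge> 1" using assms(1,2) by (simp add: Suc_le_eq card_gt_0_iff)
  have "int (card V) * c u - (\<Sum>v\<in>V. c v) = (\<Sum>v\<in>V. c u - c v)"
    by (simp add: sum_subtractf)
  also have "\<bar>\<dots>\<bar> \<le> (\<Sum>v\<in>V. \<bar>c u - c v\<bar>)" by (rule sum_abs)
  also have "\<dots> \<le> (\<Sum>v\<in>V. K)" by (rule sum_mono) (use assms in auto)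
  finally have "\<bar>int (card V) * c u - (\<Sum>v\<in>V. c v)\<bar> \<le> int (card V) * K" by simp
  moreover have "\<bar>c u\<bar> \<le> \<bar>int (card V) * c u\<bar>"
    using N by (simp add: abs_mult mult_le_cancel_right1)
  ultimately show ?thesis by linarith
qed

theorem theorem13:
  fixes m n :: nat and c0 :: "nat + nat \<Rightarrow> int"
  assumes "m \<ge> 1" and "n \<ge> 1"
  shows "\<exists>t p. p \<ge> 1 \<and>
           diffusion (Kmn_V m n) Kmn_E c0 (t + p) = diffusion (Kmn_V m n) Kmn_E c0 t"
proof -
  define V where "V = Kmn_V m n"
  define c where "c t = diffusion V Kmn_E c0 t" for t
  have fV: "finite V" unfolding V_def by (rule Kmn_fin)
  have "Inl 0 \<in> V" using assms by (auto simp: V_def Kmn_V_def)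
  then have nV: "V \<noteq> {}" by blast
  have csuc: "c (Suc t) = diffusion_step V Kmn_E (c t)" for t
    by (simp add: c_def diffusion_def)
  have c0': "c 0 = c0" by (simp add: c_def diffusion_def)
  define S0 where "S0 = (\<Sum>u\<in>V. c0 u)"
  have S: "(\<Sum>u\<in>V. c t u) = S0" for t
  proof (induction t)
    case 0 then show ?case by (simp add: c0' S0_def)
  next
    case (Suc t) then show ?case using sum_step[OF fV Kmn_sym] by (simp add: csuc)
  qed
  have off: "u \<notin> V \<Longrightarrow> c t u = c0 u" for t u
  proof (induction t)
    case 0 then show ?case by (simp add: c0')
  next
    case (Suc t) then show ?case by (simp add: csuc diffusion_step_def)
  qed
  define N where "N = int (card V)"
  define K where "K = N^3"
  define B0 where "B0 = N * (\<bar>S0\<bar> + N * (2 * K))^2 + K"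
  define Bm where "Bm = max (en V c0) B0"
  have Kn: "0 \<le> K" by (simp add: K_def N_def)
  have enb: "en V (c t) \<le> Bm" for t
  proof (induction t)
    case 0 then show ?case by (simp add: c0' Bm_def)
  next
    case (Suc t)
    have st: "en V (c (Suc t)) \<le> en V (c t) - dd V Kmn_E (c t) + K"
      unfolding csuc K_def N_def by (rule en_step[OF fV Kmn_sym])
    show ?case
    proof (cases "dd V Kmn_E (c t) \<ge> K")
      case True then show ?thesis using st Suc by linarith
    next
      case False
      have pair: "\<bar>c t u - c t v\<bar> \<le> 2 * K" if "u \<in> V" "v \<in> V" for u v
        using dd_small_pair[OF assms, of u v "c t"] that False by (simp add: V_def)
      have vb: "\<bar>c t u\<bar> \<le> \<bar>S0\<bar> + N * (2 * K)" if "u \<in> V" for u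
        using val_bound[OF fV nV, of "c t" "2 * K" u] pair that S[of t] by (simp add: N_def)
      have "en V (c t) \<le> (\<Sum>u\<in>V. (\<bar>S0\<bar> + N * (2 * K))^2)"
        unfolding en_def
      proof (rule sum_mono)
        fix u assume "u \<in> V"
        have "\<bar>c t u\<bar>^2 \<le> (\<bar>S0\<bar> + N * (2 * K))^2"
          by (rule power_mono[OF vb[OF \<open>u \<in> V\<close>]]) simp
        then show "(c t u)^2 \<le> (\<bar>S0\<bar> + N * (2 * K))^2" by simp
      qed
      also have "\<dots> = N * (\<bar>S0\<bar> + N * (2 * K))^2" by (simp add: N_def)
      finally have "en V (c t) \<le> N * (\<bar>S0\<bar> + N * (2 * K))^2" .
      moreover have "0 \<le> dd V Kmn_E (c t)" unfolding dd_def by (simp add: sum_nonneg)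
      ultimately show ?thesis using st by (simp add: Bm_def B0_def)
    qed
  qed
  have vbd: "\<bar>c t u\<bar> \<le> Bm" if "u \<in> V" for t u
  proof -
    have "\<bar>c t u\<bar> \<le> (c t u)^2"
    proof (cases "c t u = 0")
      case False
      then have "1 \<le> \<bar>c t u\<bar>" by simp
      then have "\<bar>c t u\<bar> * 1 \<le> \<bar>c t u\<bar> * \<bar>c t u\<bar>" by (intro mult_left_mono) auto
      then show ?thesis by (simp add: power2_eq_square)
    qed simp
    also have "\<dots> \<le> en V (c t)" unfolding en_def
      by (rule member_le_sum[OF that]) (simp_all add: fV)
    finally show ?thesis using enb[of t] by linarith
  qed
  define F where "F = {f. (\<forall>u\<in>V. f u \<in> {-Bm..Bm}) \<and> (\<forall>u. u \<notin> V \<longrightarrow> f u = c0 u)}"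
  have "F \<subseteq> (\<lambda>g u. if u \<in> V then g u else c0 u) ` (PiE V (\<lambda>_. {-Bm..Bm}))"
  proof
    fix f assume f: "f \<in> F"
    have "f = (\<lambda>u. if u \<in> V then restrict f V u else c0 u)"
    proof (rule ext)
      fix u show "f u = (if u \<in> V then restrict f V u else c0 u)"
        using f by (cases "u \<in> V") (auto simp: F_def)
    qed
    moreover have "restrict f V \<in> PiE V (\<lambda>_. {-Bm..Bm})" using f by (auto simp: F_def)
    ultimately show "f \<in> (\<lambda>g u. if u \<in> V then g u else c0 u) ` (PiE V (\<lambda>_. {-Bm..Bm}))"
      by blast
  qed
  moreover have "finite (PiE V (\<lambda>_. {-Bm..Bm}))" by (rule finite_PiE[OF fV]) simp
  ultimately have fF: "finite F" by (meson finite_imageI finite_subset)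
  have "range c \<subseteq> F"
  proof
    fix f assume "f \<in> range c"
    then obtain t where ft: "f = c t" by blast
    have "\<forall>u\<in>V. f u \<in> {-Bm..Bm}"
    proof
      fix u assume "u \<in> V"
      then have "\<bar>c t u\<bar> \<le> Bm" by (rule vbd)
      then show "f u \<in> {-Bm..Bm}" unfolding ft by (simp add: abs_le_iff)
    qed
    then show "f \<in> F" using off ft by (simp add: F_def)
  qed
  then have "finite (range c)" using fF finite_subset by blast
  then have "\<not> inj c" using finite_imageD infinite_UNIV_nat by blast
  then obtain i j where ij: "i \<noteq> j" "c i = c j" unfolding inj_def by blast
  show ?thesis
  proof (cases "i < j")
    case True
    then show ?thesis using ij by (intro exI[of _ i] exI[of _ "j - i"]) (simp add: c_def V_def)
  next
    case False
    then have "j < i" using ij by simp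
    then show ?thesis using ij by (intro exI[of _ j] exI[of _ "i - j"]) (simp add: c_def V_def)
  qed
qed

end
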